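(* Let $C$ be a cyclic $A_\infty$ coalgebra of degree $-d$, $R=\mathbf\Omega_\infty(\tilde C)$, $n=2-d$. Then $\bar\partial:R\to\Omega^1_{R,\natural}$ and $\beta:\Omega^1_{R,\natural}\to R$ are morphisms of Lie modules over $R_\natural$, that is, $$\bar\partial\{r,q\}=\{r,\bar\partial(q)\}_{\Omega^1_{R,\natural}},\qquad\beta\{r,\omega\}_{\Omega^1_{R,\natural}}=\{r,\beta(\omega)\}$$ for $r,q\in R$ and $\omega\in\Omega^1_{R,\natural}$.
   Context: $C$ is a cyclic $A_\infty$ coalgebra of degree $-d$ (graded, locally finite, $\triangle_n:C\to C^{\otimes n}$ of degree $n-2$ with the $A_\infty$ relations, nondegenerate graded-symmetric $\langle-,-\rangle:C\otimes C\to k[d]$ with $\langle a,b^1\rangle b^2\cdots b^r=(-1)^{r+|b^1|(|a|+r)}\langle b,a^r\rangle a^1\cdots a^{r-1}$). $R=T(s^{-1}C)$ is the cobar construction of $k\oplus C$, with double bracket $\{\!\{r,q\}\!\}=\sum_{i,j}(-1)^{|v_i|+\epsilon}\langle v_i,w_j\rangle(s^{-1}w_1\cdots s^{-1}w_{j-1}s^{-1}v_{i+1}\cdots s^{-1}v_k)\otimes(s^{-1}v_1\cdots s^{-1}v_{i-1}s^{-1}w_{j+1}\cdots s^{-1}w_m)$ for $r=(s^{-1}v_1\cdots s^{-1}v_k)$, $q=(s^{-1}w_1\cdots s^{-1}w_m)$, $\epsilon=(|r|+d)\sum_{l<j}|s^{-1}w_l|+(\sum_{l<i}|s^{-1}v_l|+|s^{-1}w_j|+d)\sum_{l>i}|s^{-1}v_l|$,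 and $\{-,-\}=\mu\circ\{\!\{-,-\}\!\}$. $\Omega^1_R=\ker(R\otimes R\to R)\cong R\otimes s^{-1}C\otimes R$ via $\mathrm I(b\otimes x\otimes c)=bx\otimes c-b\otimes xc$; $\Omega^1_{R,\natural}=\Omega^1_R/[R,\Omega^1_R]\cong R\otimes s^{-1}C$. The universal derivation $\partial(x_1\cdots x_m)=\sum_i(x_1\cdots x_{i-1})\otimes x_i\otimes(x_{i+1}\cdots x_m)$ induces $\bar\partial(x_1\cdots x_m)=\sum_i(-1)^{(|x_1|+\cdots+|x_i|)(|x_{i+1}|+\cdots+|x_m|)}(x_{i+1}\cdots x_mx_1\cdots x_{i-1})\otimes x_i$, and $\beta((x_1\cdots x_m)\otimes x_{m+1})=x_1\cdots x_{m+1}-(-1)^{|x_{m+1}|(|x_1|+\cdots+|x_m|)}x_{m+1}x_1\cdots x_m$ ($x_i\in s^{-1}C$). On $R\otimes R$: $\{\!\{r,p\otimes q\}\!\}_{R\otimes R}=\{\!\{r,p\}\!\}\otimes q+(-1)^{|p|(|r|+n)}p\otimes\{\!\{r,q\}\!\}$; for $\omega\in\Omega^1_R$, $\{r,\omega\}_{\Omega^1_R}$ is obtained by applying the bimodule action map to $\{\!\{r,\mathrm I(\omega)\}\!\}_{R\otimes R}\in(R\otimes\Omega^1_R)\oplus(\Omega^1_R\otimes R)$, and $\{r,\omega\}_{\Omega^1_{R,\natural}}$ is its image in $\Omega^1_{R,\natural}$. *)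

theory Defs
  imports Main
begin

(* C is a graded k-vector space given by a homogeneous basis, indexed by the
   type 'b, with (homological) degree  deg :: 'b => int.
   A letter of R = T(s^{-1} C) is s^{-1} b for a basis element b; it has degree
   deg b - 1.  A basis of R is given by words  'b list  (the empty word is 1).
   Vectors are coefficient functions (finitely supported where relevant):
     R               :  'b list => 'k
     R (x) R         :  'b list * 'b list => 'k
     R (x) R (x) R   :  'b list * 'b list * 'b list => 'k
     Omega^1_{R,nat} = R (x) s^{-1}C          :  'b list * 'b => 'k
     Omega^1_R       = R (x) s^{-1}C (x) R    :  'b list * 'b * 'b list => 'k
   Linear maps are given by their values on basis vectors and extended
   linearly (lin), bilinear maps likewise (ext2).
--------------------------------------------------------------------------- *)

definition sgn :: "int \<Rightarrow> 'k::field" where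
  "sgn e = (if even e then 1 else -1)"

definition supp :: "('a \<Rightarrow> 'k::zero) \<Rightarrow> 'a set" where
  "supp f = {x. f x \<noteq> 0}"

definition fin_supp :: "('a \<Rightarrow> 'k::zero) \<Rightarrow> bool" where
  "fin_supp f \<longleftrightarrow> finite (supp f)"

definition vec :: "'a \<Rightarrow> 'k::zero \<Rightarrow> 'a \<Rightarrow> 'k" where
  "vec a c = (\<lambda>z. if z = a then c else 0)"

definition lin :: "('a \<Rightarrow> 'c \<Rightarrow> 'k::field) \<Rightarrow> ('a \<Rightarrow> 'k) \<Rightarrow> 'c \<Rightarrow> 'k" where
  "lin f T = (\<lambda>z. \<Sum>a\<in>supp T. T a * f a z)"

definition ext2 :: "('a \<Rightarrow> 'b \<Rightarrow> 'c \<Rightarrow> 'k::field) \<Rightarrow> ('a \<Rightarrow> 'k) \<Rightarrow> ('b \<Rightarrow> 'k) \<Rightarrow> 'c \<Rightarrow> 'k" where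
  "ext2 F S T = (\<lambda>z. \<Sum>a\<in>supp S. \<Sum>b\<in>supp T. S a * T b * F a b z)"

(* degree in C of a word of basis elements (C^{(x) m}) *)
definition cdeg :: "('b \<Rightarrow> int) \<Rightarrow> 'b list \<Rightarrow> int" where
  "cdeg deg w = sum_list (map deg w)"

definition sdeg :: "('b \<Rightarrow> int) \<Rightarrow> 'b \<Rightarrow> int" where
  "sdeg deg b = deg b - 1"

(* degree in R of the word s^{-1}w_1 ... s^{-1}w_m *)
definition wdeg :: "('b \<Rightarrow> int) \<Rightarrow> 'b list \<Rightarrow> int" where
  "wdeg deg w = sum_list (map (sdeg deg) w)"

(* Delta_n(e) = sum_w D n e w * w  (w a word of length n) *)
definition Ainf_coalgebra ::
  "('b \<Rightarrow> int) \<Rightarrow> (nat \<Rightarrow> 'b \<Rightarrow> 'b list \<Rightarrow> 'k::field) \<Rightarrow> bool" where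
  "Ainf_coalgebra deg D \<longleftrightarrow>
     (\<forall>i. finite {b. deg b = i}) \<comment> \<open>locally finite\<close>
   \<and> (\<forall>n e. finite {w. D n e w \<noteq> 0})
   \<and> (\<forall>e. finite {n. \<exists>w. D n e w \<noteq> 0})
   \<and> (\<forall>n e w. D n e w \<noteq> 0 \<longrightarrow> 1 \<le> n \<and> length w = n \<and> cdeg deg w = deg e + int n - 2)
   \<and> (\<forall>n\<ge>1. \<forall>e w. length w = n \<longrightarrow>
        (\<Sum>r\<le>n. \<Sum>s\<in>{1..n-r}.
           \<Sum>u\<in>{u. D (n - s + 1) e u \<noteq> 0}.
             (if take r u = take r w \<and> drop (Suc r) u = drop (r + s) w
              then sgn (int r + int s * int (n - r - s) + (int s - 2) * cdeg deg (take r u))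
                   * D (n - s + 1) e u * D s (u ! r) (take s (drop r w))
              else 0)) = 0)"

definition cyclic_pairing ::
  "('b \<Rightarrow> int) \<Rightarrow> (nat \<Rightarrow> 'b \<Rightarrow> 'b list \<Rightarrow> 'k::field) \<Rightarrow> ('b \<Rightarrow> 'b \<Rightarrow> 'k) \<Rightarrow> int \<Rightarrow> bool" where
  "cyclic_pairing deg D pair d \<longleftrightarrow>
     (\<forall>a b. pair a b \<noteq> 0 \<longrightarrow> deg a + deg b = d)
   \<and> (\<forall>a b. pair a b = sgn (deg a * deg b) * pair b a)
   \<and> (\<forall>f :: 'b \<Rightarrow> 'k. fin_supp f \<longrightarrow> (\<forall>b. (\<Sum>a\<in>supp f. f a * pair a b) = 0) \<longrightarrow> f = (\<lambda>_. 0))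
   \<and> (\<forall>r\<ge>1. \<forall>a b u. length u = r - 1 \<longrightarrow>
        (\<Sum>x\<in>{x. D r b (x # u) \<noteq> 0}.
            sgn (int r + deg x * (deg a + int r)) * pair a x * D r b (x # u))
      = (\<Sum>y\<in>{y. D r a (u @ [y]) \<noteq> 0}. pair b y * D r a (u @ [y])))"

definition cyclic_Ainf_coalgebra ::
  "('b \<Rightarrow> int) \<Rightarrow> (nat \<Rightarrow> 'b \<Rightarrow> 'b list \<Rightarrow> 'k::field) \<Rightarrow> ('b \<Rightarrow> 'b \<Rightarrow> 'k) \<Rightarrow> int \<Rightarrow> bool" where
  "cyclic_Ainf_coalgebra deg D pair d \<longleftrightarrow> Ainf_coalgebra deg D \<and> cyclic_pairing deg D pair d"

definition dbr_basis ::
  "('b \<Rightarrow> int) \<Rightarrow> ('b \<Rightarrow> 'b \<Rightarrow> 'k::field) \<Rightarrow> int \<Rightarrow> 'b list \<Rightarrow> 'b list \<Rightarrow> 'b list \<times> 'b list \<Rightarrow> 'k" where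
  "dbr_basis deg pair d v w = (\<lambda>z.
     \<Sum>i<length v. \<Sum>j<length w.
       (if z = (take j w @ drop (Suc i) v, take i v @ drop (Suc j) w)
        then sgn (deg (v ! i)
                  + (wdeg deg v + d) * wdeg deg (take j w)
                  + (wdeg deg (take i v) + sdeg deg (w ! j) + d) * wdeg deg (drop (Suc i) v))
             * pair (v ! i) (w ! j)
        else 0))"

definition dbr ::
  "('b \<Rightarrow> int) \<Rightarrow> ('b \<Rightarrow> 'b \<Rightarrow> 'k::field) \<Rightarrow> int \<Rightarrow> ('b list \<Rightarrow> 'k) \<Rightarrow> ('b list \<Rightarrow> 'k) \<Rightarrow> 'b list \<times> 'b list \<Rightarrow> 'k" where
  "dbr deg pair d = ext2 (dbr_basis deg pair d)"

definition mult :: "('b list \<times> 'b list \<Rightarrow> 'k::field) \<Rightarrow> 'b list \<Rightarrow> 'k" where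
  "mult = lin (\<lambda>(p, q). vec (p @ q) 1)"

definition br ::
  "('b \<Rightarrow> int) \<Rightarrow> ('b \<Rightarrow> 'b \<Rightarrow> 'k::field) \<Rightarrow> int \<Rightarrow> ('b list \<Rightarrow> 'k) \<Rightarrow> ('b list \<Rightarrow> 'k) \<Rightarrow> 'b list \<Rightarrow> 'k" where
  "br deg pair d r q = mult (dbr deg pair d r q)"

(* {r, -}_{Omega^1_R} on a basis word v (for r) and a basis tensor p (x) q of
   R (x) R: the double bracket {{v, p (x) q}}_{R(x)R}
      = {{v,p}} (x) q + (-1)^{|p|(|v|+n)} p (x) {{v,q}},  n = 2 - d,
   followed by the action (multiplication) maps: on the first summand the
   first two tensor factors are multiplied, (u (x) u') (x) q |-> uu' (x) q,
   and on the second summand the last two, p (x) (u (x) u') |-> p (x) uu'.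
   (So {r, p (x) q} = {r,p} (x) q + (-1)^{|p|(|r|+n)} p (x) {r,q}.) *)
definition brOm_basis ::
  "('b \<Rightarrow> int) \<Rightarrow> ('b \<Rightarrow> 'b \<Rightarrow> 'k::field) \<Rightarrow> int \<Rightarrow> 'b list \<Rightarrow> 'b list \<times> 'b list \<Rightarrow> 'b list \<times> 'b list \<Rightarrow> 'k" where
  "brOm_basis deg pair d v pq = (case pq of (p, q) \<Rightarrow>
     let first  = (\<lambda>(a, b, c). dbr_basis deg pair d v p (a, b) * (if c = q then 1 else 0));
         second = (\<lambda>(a, b, c). sgn (wdeg deg p * (wdeg deg v + (2 - d)))
                                * (if a = p then 1 else 0) * dbr_basis deg pair d v q (b, c))
     in (\<lambda>z. lin (\<lambda>(a, b, c). vec (a @ b, c) 1) first z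
            + lin (\<lambda>(a, b, c). vec (a, b @ c) 1) second z))"

definition brOm ::
  "('b \<Rightarrow> int) \<Rightarrow> ('b \<Rightarrow> 'b \<Rightarrow> 'k::field) \<Rightarrow> int \<Rightarrow> ('b list \<Rightarrow> 'k) \<Rightarrow> ('b list \<times> 'b list \<Rightarrow> 'k) \<Rightarrow> 'b list \<times> 'b list \<Rightarrow> 'k" where
  "brOm deg pair d = ext2 (brOm_basis deg pair d)"

(* I : R (x) s^{-1}C (x) R -> Omega^1_R \<subseteq> R (x) R,  b x c |-> bx (x) c - b (x) xc *)
definition Imap :: "('b list \<times> 'b \<times> 'b list \<Rightarrow> 'k::field) \<Rightarrow> 'b list \<times> 'b list \<Rightarrow> 'k" where
  "Imap = lin (\<lambda>(b, x, c). (\<lambda>z. vec (b @ [x], c) 1 z - vec (b, x # c) 1 z))"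

(* inverse of I on Omega^1_R = ker(mult):  u (x) v |-> (\<partial> u) v *)
definition Jmap :: "('b list \<times> 'b list \<Rightarrow> 'k::field) \<Rightarrow> 'b list \<times> 'b \<times> 'b list \<Rightarrow> 'k" where
  "Jmap = lin (\<lambda>(u, v). (\<lambda>z. \<Sum>i<length u. vec (take i u, u ! i, drop (Suc i) u @ v) 1 z))"

(* projection Omega^1_R = R (x) s^{-1}C (x) R -> Omega^1_{R,nat} = R (x) s^{-1}C,
   b (x) x (x) c |-> (-1)^{|c|(|b|+|x|)} cb (x) x *)
definition natmap :: "('b \<Rightarrow> int) \<Rightarrow> ('b list \<times> 'b \<times> 'b list \<Rightarrow> 'k::field) \<Rightarrow> 'b list \<times> 'b \<Rightarrow> 'k" where
  "natmap deg = lin (\<lambda>(b, x, c). vec (c @ b, x) (sgn (wdeg deg c * (wdeg deg b + sdeg deg x))))"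

(* section Omega^1_{R,nat} -> Omega^1_R,  b (x) x |-> b (x) x (x) 1 *)
definition liftmap :: "('b list \<times> 'b \<Rightarrow> 'k::field) \<Rightarrow> 'b list \<times> 'b \<times> 'b list \<Rightarrow> 'k" where
  "liftmap = lin (\<lambda>(b, x). vec (b, x, []) 1)"

definition brNat ::
  "('b \<Rightarrow> int) \<Rightarrow> ('b \<Rightarrow> 'b \<Rightarrow> 'k::field) \<Rightarrow> int \<Rightarrow> ('b list \<Rightarrow> 'k) \<Rightarrow> ('b list \<times> 'b \<Rightarrow> 'k) \<Rightarrow> 'b list \<times> 'b \<Rightarrow> 'k" where
  "brNat deg pair d r \<omega> = natmap deg (Jmap (brOm deg pair d r (Imap (liftmap \<omega>))))"

definition dbar :: "('b \<Rightarrow> int) \<Rightarrow> ('b list \<Rightarrow> 'k::field) \<Rightarrow> 'b list \<times> 'b \<Rightarrow> 'k" where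
  "dbar deg = lin (\<lambda>w. (\<lambda>z. \<Sum>i<length w.
      vec (drop (Suc i) w @ take i w, w ! i)
          (sgn (wdeg deg (take (Suc i) w) * wdeg deg (drop (Suc i) w))) z))"

definition beta :: "('b \<Rightarrow> int) \<Rightarrow> ('b list \<times> 'b \<Rightarrow> 'k::field) \<Rightarrow> 'b list \<Rightarrow> 'k" where
  "beta deg = lin (\<lambda>(w, x). (\<lambda>z. vec (w @ [x]) 1 z
                                 - vec (x # w) (sgn (sdeg deg x * wdeg deg w)) z))"

end

theory Submission
  imports Defs
begin


lemma vec_apply: "vec a c z = (if z = a then c else 0)" by (simp add: vec_def)

lemma supp_vec: "supp (vec a c) \<subseteq> {a}" by (auto simp: supp_def vec_def)
lemma fin_supp_vec[simp]: "fin_supp (vec a c)"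
  unfolding fin_supp_def by (rule finite_subset[OF supp_vec]) simp

lemma lin_superset:
  assumes "finite A" "supp T \<subseteq> A"
  shows "lin f T z = (\<Sum>a\<in>A. T a * f a z)"
  unfolding lin_def using assms
  by (intro sum.mono_neutral_left) (auto simp: supp_def)

lemma lin_vec[simp]: "lin f (vec a (c::'k::field)) = (\<lambda>z. c * f a z)"
proof
  fix z show "lin f (vec a c) z = c * f a z"
    using lin_superset[of "{a}" "vec a c" f z, OF _ supp_vec] by (simp add: vec_def)
qed

lemma supp_sum: "supp (\<lambda>z. \<Sum>i\<in>I. T i z) \<subseteq> (\<Union>i\<in>I. supp (T i))"
  by (auto simp: supp_def) (meson sum.neutral)

lemma fin_supp_sum[intro]: "finite I \<Longrightarrow> (\<And>i. i \<in> I \<Longrightarrow> fin_supp (T i)) \<Longrightarrow> fin_supp (\<lambda>z. \<Sum>i\<in>I. T i z)"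
  unfolding fin_supp_def by (rule finite_subset[OF supp_sum]) auto

lemma fin_supp_add[intro]: "fin_supp S \<Longrightarrow> fin_supp T \<Longrightarrow> fin_supp (\<lambda>z. S z + (T z::'k::field))"
  unfolding fin_supp_def by (rule finite_subset[of _ "supp S \<union> supp T"]) (auto simp: supp_def)
lemma fin_supp_diff[intro]: "fin_supp S \<Longrightarrow> fin_supp T \<Longrightarrow> fin_supp (\<lambda>z. S z - (T z::'k::field))"
  unfolding fin_supp_def by (rule finite_subset[of _ "supp S \<union> supp T"]) (auto simp: supp_def)
lemma fin_supp_scale[intro]: "fin_supp T \<Longrightarrow> fin_supp (\<lambda>z. c * (T z::'k::field))"
  unfolding fin_supp_def by (rule finite_subset[of _ "supp T"]) (auto simp: supp_def)

lemma fin_supp_lin[intro]: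
  assumes "fin_supp T" "\<And>a. fin_supp (f a)"
  shows "fin_supp (lin f T)"
  unfolding lin_def using assms fin_supp_def by (intro fin_supp_sum fin_supp_scale) auto

lemma lin_sum:
  assumes "finite I" "\<And>i. i \<in> I \<Longrightarrow> fin_supp (T i)"
  shows "lin f (\<lambda>z. \<Sum>i\<in>I. T i z) = (\<lambda>z. \<Sum>i\<in>I. lin f (T i) z)"
proof
  fix z
  define A where "A = (\<Union>i\<in>I. supp (T i))"
  have fA: "finite A" using assms by (auto simp: A_def fin_supp_def)
  have "lin f (\<lambda>z. \<Sum>i\<in>I. T i z) z = (\<Sum>a\<in>A. (\<Sum>i\<in>I. T i a) * f a z)"
    by (rule lin_superset[OF fA]) (use supp_sum[of T I] in \<open>simp add: A_def\<close>)
  also have "\<dots> = (\<Sum>i\<in>I. \<Sum>a\<in>A. T i a * f a z)"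
    by (simp add: sum_distrib_right) (rule sum.swap)
  also have "\<dots> = (\<Sum>i\<in>I. lin f (T i) z)"
    by (rule sum.cong[OF refl], rule lin_superset[OF fA, symmetric]) (auto simp: A_def)
  finally show "lin f (\<lambda>z. \<Sum>i\<in>I. T i z) z = (\<Sum>i\<in>I. lin f (T i) z)" .
qed

lemma lin_scale:
  assumes "fin_supp T"
  shows "lin f (\<lambda>z. c * T z) = (\<lambda>z. c * lin f T z)"
proof
  fix z
  have fA: "finite (supp T)" using assms fin_supp_def by auto
  have "lin f (\<lambda>z. c * T z) z = (\<Sum>a\<in>supp T. (c * T a) * f a z)"
    by (rule lin_superset[OF fA]) (auto simp: supp_def)
  also have "\<dots> = c * lin f T z" by (simp add: lin_def sum_distrib_left mult.assoc)
  finally show "lin f (\<lambda>z. c * T z) z = c * lin f T z" .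
qed

lemma lin_add:
  assumes "fin_supp S" "fin_supp T"
  shows "lin f (\<lambda>z. S z + T z) = (\<lambda>z. lin f S z + lin f T z)"
proof
  fix z
  define A where "A = supp S \<union> supp T"
  have fA: "finite A" using assms by (auto simp: A_def fin_supp_def)
  have "lin f (\<lambda>z. S z + T z) z = (\<Sum>a\<in>A. (S a + T a) * f a z)"
    by (rule lin_superset[OF fA]) (auto simp: A_def supp_def)
  also have "\<dots> = (\<Sum>a\<in>A. S a * f a z) + (\<Sum>a\<in>A. T a * f a z)"
    by (simp add: distrib_right sum.distrib)
  also have "\<dots> = lin f S z + lin f T z"
  proof -
      have h1: "lin f S z = (\<Sum>a\<in>A. S a * f a z)" by (rule lin_superset[OF fA]) (auto simp: A_def)
      have h2: "lin f T z = (\<Sum>a\<in>A. T a * f a z)" by (rule lin_superset[OF fA]) (auto simp: A_def)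
      show ?thesis by (simp only: h1 h2)
    qed
  finally show "lin f (\<lambda>z. S z + T z) z = lin f S z + lin f T z" .
qed

lemma lin_diff:
  assumes "fin_supp S" "fin_supp T"
  shows "lin f (\<lambda>z. S z - T z) = (\<lambda>z. lin f S z - lin f T z)"
proof
  fix z
  define A where "A = supp S \<union> supp T"
  have fA: "finite A" using assms by (auto simp: A_def fin_supp_def)
  have "lin f (\<lambda>z. S z - T z) z = (\<Sum>a\<in>A. (S a - T a) * f a z)"
    by (rule lin_superset[OF fA]) (auto simp: A_def supp_def)
  also have "\<dots> = (\<Sum>a\<in>A. S a * f a z) - (\<Sum>a\<in>A. T a * f a z)"
    by (simp add: left_diff_distrib sum_subtractf)
  also have "\<dots> = lin f S z - lin f T z"
  proof -
      have h1: "lin f S z = (\<Sum>a\<in>A. S a * f a z)" by (rule lin_superset[OF fA]) (auto simp: A_def)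
      have h2: "lin f T z = (\<Sum>a\<in>A. T a * f a z)" by (rule lin_superset[OF fA]) (auto simp: A_def)
      show ?thesis by (simp only: h1 h2)
    qed
  finally show "lin f (\<lambda>z. S z - T z) z = lin f S z - lin f T z" .
qed

lemma lin_lin:
  assumes "fin_supp T" "\<And>a. fin_supp (f a)"
  shows "lin g (lin f T) = lin (\<lambda>a. lin g (f a)) T"
proof -
  have "lin f T = (\<lambda>z. \<Sum>a\<in>supp T. T a * f a z)" by (simp add: lin_def)
  moreover have "lin g (\<lambda>z. \<Sum>a\<in>supp T. T a * f a z) = (\<lambda>z. \<Sum>a\<in>supp T. lin g (\<lambda>z. T a * f a z) z)"
    using assms by (intro lin_sum fin_supp_scale) (auto simp: fin_supp_def)
  ultimately have "lin g (lin f T) = (\<lambda>z. \<Sum>a\<in>supp T. lin g (\<lambda>z. T a * f a z) z)" by simp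
  also have "\<dots> = (\<lambda>z. \<Sum>a\<in>supp T. T a * lin g (f a) z)"
    using assms by (simp add: lin_scale)
  finally show ?thesis by (simp add: lin_def)
qed

lemma lin_sumvec:
  assumes "finite I"
  shows "lin f (\<lambda>z. \<Sum>i\<in>I. vec (K i) (c i) z) = (\<lambda>z. \<Sum>i\<in>I. c i * f (K i) z)"
  using assms by (simp add: lin_sum)

lemma lin_sumvec2:
  assumes "finite I" "\<And>i. finite (J i)"
  shows "lin f (\<lambda>z. \<Sum>i\<in>I. \<Sum>j\<in>J i. vec (K i j) (c i j) z) = (\<lambda>z. \<Sum>i\<in>I. \<Sum>j\<in>J i. c i j * f (K i j) z)"
  using assms by (simp add: lin_sum fin_supp_sum)

lemma ext2_lin: "ext2 F S T = (\<lambda>z. \<Sum>a\<in>supp S. S a * lin (F a) T z)"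
  by (simp add: ext2_def lin_def sum_distrib_left mult.assoc)

lemma fin_supp_ext2[intro]: "fin_supp S \<Longrightarrow> fin_supp T \<Longrightarrow> (\<And>a b. fin_supp (F a b)) \<Longrightarrow> fin_supp (ext2 F S T)"
  unfolding ext2_lin by (intro fin_supp_sum fin_supp_scale fin_supp_lin) (auto simp: fin_supp_def)



definition cf :: "('b \<Rightarrow> int) \<Rightarrow> ('b \<Rightarrow> 'b \<Rightarrow> 'k::field) \<Rightarrow> int \<Rightarrow> 'b list \<Rightarrow> 'b list \<Rightarrow> nat \<Rightarrow> nat \<Rightarrow> 'k" where
  "cf deg pair d v w i j = Defs.sgn (deg (v ! i)
                  + (wdeg deg v + d) * wdeg deg (take j w)
                  + (wdeg deg (take i v) + sdeg deg (w ! j) + d) * wdeg deg (drop (Suc i) v))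
             * pair (v ! i) (w ! j)"

definition Kc :: "'b list \<Rightarrow> 'b list \<Rightarrow> nat \<Rightarrow> nat \<Rightarrow> 'b list" where
  "Kc v w i j = take j w @ drop (Suc i) v @ take i v @ drop (Suc j) w"

definition M :: "('b \<Rightarrow> int) \<Rightarrow> ('b \<Rightarrow> 'b \<Rightarrow> 'k::field) \<Rightarrow> int \<Rightarrow> 'b list \<Rightarrow> 'b list \<Rightarrow> 'b list \<Rightarrow> 'k" where
  "M deg pair d v w = (\<lambda>z. \<Sum>i<length v. \<Sum>j<length w. vec (Kc v w i j) (cf deg pair d v w i j) z)"

definition DB :: "('b \<Rightarrow> int) \<Rightarrow> 'b list \<Rightarrow> 'b list \<times> 'b \<Rightarrow> 'k::field" where
  "DB deg w = (\<lambda>z. \<Sum>i<length w.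
      vec (drop (Suc i) w @ take i w, w ! i)
          (Defs.sgn (wdeg deg (take (Suc i) w) * wdeg deg (drop (Suc i) w))) z)"

definition BB :: "('b \<Rightarrow> int) \<Rightarrow> 'b list \<times> 'b \<Rightarrow> 'b list \<Rightarrow> 'k::field" where
  "BB deg p = (\<lambda>z. vec (fst p @ [snd p]) 1 z - vec (snd p # fst p) (Defs.sgn (sdeg deg (snd p) * wdeg deg (fst p))) z)"

definition JNt :: "('b \<Rightarrow> int) \<Rightarrow> 'b list \<Rightarrow> 'b list \<Rightarrow> nat \<Rightarrow> 'b list \<times> 'b \<Rightarrow> 'k::field" where
  "JNt deg u q t = vec (drop (Suc t) u @ q @ take t u, u ! t)
      (Defs.sgn (wdeg deg (drop (Suc t) u @ q) * (wdeg deg (take t u) + sdeg deg (u ! t))))"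

definition JN :: "('b \<Rightarrow> int) \<Rightarrow> 'b list \<times> 'b list \<Rightarrow> 'b list \<times> 'b \<Rightarrow> 'k::field" where
  "JN deg p = (\<lambda>z. \<Sum>t<length (fst p). JNt deg (fst p) (snd p) t z)"

definition Psi :: "('b \<Rightarrow> int) \<Rightarrow> ('b \<Rightarrow> 'b \<Rightarrow> 'k::field) \<Rightarrow> int \<Rightarrow> 'b list \<Rightarrow> 'b list \<times> 'b \<Rightarrow> 'b list \<times> 'b \<Rightarrow> 'k" where
  "Psi deg pair d v p = lin (JN deg) (lin (brOm_basis deg pair d v) (Imap (liftmap (vec p 1))))"

lemma vec_scale: "c * vec a 1 z = vec a (c::'k::field) z" by (simp add: vec_def)
lemma vec_scale2: "c * vec a c' z = vec a (c * c' :: 'k::field) z" by (simp add: vec_def)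

lemma dbr_basis_eq: "dbr_basis deg pair d v w = (\<lambda>z. \<Sum>i<length v. \<Sum>j<length w.
    vec (take j w @ drop (Suc i) v, take i v @ drop (Suc j) w) (cf deg pair d v w i j) z)"
  by (simp add: dbr_basis_def cf_def vec_def fun_eq_iff)

lemma fin_supp_dbr[intro]: "fin_supp (dbr_basis deg pair d v w)"
  unfolding dbr_basis_eq by (intro fin_supp_sum) auto

lemma M_eq: "mult (dbr_basis deg pair d v w) = M deg pair d v w"
  unfolding dbr_basis_eq mult_def M_def
  by (subst lin_sumvec2) (auto simp: Kc_def vec_scale)

lemma fin_supp_M[intro]: "fin_supp (M deg pair d v w)"
  unfolding M_def by (intro fin_supp_sum) auto

lemma dbar_eq: "dbar deg = lin (DB deg)"
  unfolding dbar_def DB_def[abs_def] by simp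

lemma fin_supp_DB[intro]: "fin_supp (DB deg w)"
  unfolding DB_def by (intro fin_supp_sum) auto

lemma beta_eq: "beta deg = lin (BB deg)"
  unfolding beta_def BB_def by (rule arg_cong[where f=lin]) (auto simp: fun_eq_iff)

lemma fin_supp_BB[intro]: "fin_supp (BB deg p)"
  unfolding BB_def by (intro fin_supp_diff) auto

lemma fin_supp_JN[intro]: "fin_supp (JN deg p)"
  unfolding JN_def JNt_def by (intro fin_supp_sum) auto

lemma fin_supp_Jb[intro]: "fin_supp ((\<lambda>(u, v). (\<lambda>z. \<Sum>i<length u. vec (take i u, u ! i, drop (Suc i) u @ v) 1 z)) p)"
  by (cases p) (auto intro!: fin_supp_sum)

lemma fin_supp_natb[intro]: "fin_supp ((\<lambda>(b, x, c). vec (c @ b, x) (Defs.sgn (wdeg deg c * (wdeg deg b + sdeg deg x)))) p)"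
  by (cases p) auto

lemma natJ_eq:
  assumes "fin_supp X"
  shows "natmap deg (Jmap X) = lin (JN deg) X"
proof -
  have "natmap deg (Jmap X) = lin (\<lambda>p. natmap deg ((\<lambda>(u, v). (\<lambda>z. \<Sum>i<length u. vec (take i u, u ! i, drop (Suc i) u @ v) 1 z)) p)) X"
    unfolding natmap_def Jmap_def using assms by (intro lin_lin) auto
  also have "\<dots> = lin (JN deg) X"
  proof (rule arg_cong[where f="\<lambda>f. lin f X"], rule ext)
    fix p :: "'a list \<times> 'a list"
    obtain u q where p: "p = (u, q)" by (cases p)
    show "natmap deg ((\<lambda>(u, v). (\<lambda>z. \<Sum>i<length u. vec (take i u, u ! i, drop (Suc i) u @ v) 1 z)) p) = JN deg p"
      unfolding p natmap_def prod.case by (subst lin_sumvec) (auto simp: JN_def JNt_def)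
  qed
  finally show ?thesis .
qed

lemma brOm_basis_eq: "brOm_basis deg pair d v (p, q) = (\<lambda>z.
    (\<Sum>i<length v. \<Sum>j<length p. vec (Kc v p i j, q) (cf deg pair d v p i j) z)
  + (\<Sum>i<length v. \<Sum>j<length q. vec (p, Kc v q i j) (Defs.sgn (wdeg deg p * (wdeg deg v + (2 - d))) * cf deg pair d v q i j) z))"
proof -
  have f: "(\<lambda>(a, b, c). dbr_basis deg pair d v p (a, b) * (if c = q then 1 else 0))
     = (\<lambda>z. \<Sum>i<length v. \<Sum>j<length p. vec (take j p @ drop (Suc i) v, take i v @ drop (Suc j) p, q) (cf deg pair d v p i j) z)"
    by (auto simp: fun_eq_iff dbr_basis_eq vec_def sum_distrib_right intro!: sum.cong)
  have s: "(\<lambda>(a, b, c). Defs.sgn (wdeg deg p * (wdeg deg v + (2 - d))) * (if a = p then 1 else 0) * dbr_basis deg pair d v q (b, c))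
     = (\<lambda>z. \<Sum>i<length v. \<Sum>j<length q. vec (p, take j q @ drop (Suc i) v, take i v @ drop (Suc j) q) (Defs.sgn (wdeg deg p * (wdeg deg v + (2 - d))) * cf deg pair d v q i j) z)"
    by (auto simp: fun_eq_iff dbr_basis_eq vec_def sum_distrib_left intro!: sum.cong)
  show ?thesis
    unfolding brOm_basis_def Let_def prod.case f s
    by (subst lin_sumvec2, simp, simp)+ (simp add: Kc_def vec_scale)
qed

lemma fin_supp_brOm[intro]: "fin_supp (brOm_basis deg pair d v p)"
  by (cases p) (simp only: brOm_basis_eq, intro fin_supp_add fin_supp_sum, auto)

lemma fin_supp_f2[intro]: "fin_supp ((\<lambda>(b, x, c). (\<lambda>z. vec (b @ [x], c) 1 z - vec (b, x # c) (1::'k::field) z)) p)"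
  by (cases p) (auto intro!: fin_supp_diff)

lemma fin_supp_f1[intro]: "fin_supp ((\<lambda>(b, x). vec (b, x, []) 1) p)"
  by (cases p) auto



lemma sgn_add: "Defs.sgn (a + b) = (Defs.sgn a * Defs.sgn b :: 'k::field)"
  by (simp add: Defs.sgn_def)
lemma sgn_even: "even (a - b) \<Longrightarrow> Defs.sgn a = (Defs.sgn b :: 'k::field)"
  by (simp add: Defs.sgn_def)
lemma sgn_0[simp]: "Defs.sgn 0 = (1::'k::field)" by (simp add: Defs.sgn_def)
lemma sgn_sq: "Defs.sgn a * Defs.sgn a = (1 :: 'k::field)" by (simp add: Defs.sgn_def)

lemma wdeg_append[simp]: "wdeg deg (xs @ ys) = wdeg deg xs + wdeg deg ys" by (simp add: wdeg_def)
lemma wdeg_Cons[simp]: "wdeg deg (x # ys) = sdeg deg x + wdeg deg ys" by (simp add: wdeg_def)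
lemma wdeg_Nil[simp]: "wdeg deg [] = 0" by (simp add: wdeg_def)

lemma sum_split_add: "(\<Sum>t<m + (n::nat). (f t :: 'a::comm_monoid_add)) = (\<Sum>t<m. f t) + (\<Sum>s<n. f (m + s))"
  by (induction n) (simp_all add: add.assoc)

lemma JN_eq: "JN deg (u, q) z = (\<Sum>t<length u. JNt deg u q t z)" by (simp add: JN_def)

lemma JN_snoc: "JN deg (u @ [x], []) z = JN deg (u, [x]) z + vec (u, x) 1 z"
proof -
  have "JN deg (u @ [x], []) z = (\<Sum>t<length u. JNt deg (u @ [x]) [] t z) + JNt deg (u @ [x]) [] (length u) z"
    by (simp add: JN_eq)
  also have "(\<Sum>t<length u. JNt deg (u @ [x]) [] t z) = (\<Sum>t<length u. JNt deg u [x] t z)"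
    by (rule sum.cong) (auto simp: JNt_def nth_append)
  also have "JNt deg (u @ [x]) [] (length u) z = vec (u, x) 1 z"
    by (simp add: JNt_def)
  finally show ?thesis by (simp add: JN_eq)
qed

lemma JN_app: "JN deg (b @ V, []) z = JN deg (b, V) z + (\<Sum>s<length V. JNt deg (b @ V) [] (length b + s) z)"
proof -
  have "JN deg (b @ V, []) z = (\<Sum>t<length b. JNt deg (b @ V) [] t z) + (\<Sum>s<length V. JNt deg (b @ V) [] (length b + s) z)"
    by (simp add: JN_eq sum_split_add)
  also have "(\<Sum>t<length b. JNt deg (b @ V) [] t z) = (\<Sum>t<length b. JNt deg b V t z)"
    by (rule sum.cong) (auto simp: JNt_def nth_append)
  finally show ?thesis by (simp add: JN_eq)
qed

lemma cf_snoc: "j < length b \<Longrightarrow> cf deg pair d v (b @ [x]) i j = cf deg pair d v b i j"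
  by (simp add: cf_def nth_append)
lemma Kc_snoc: "j < length b \<Longrightarrow> Kc v (b @ [x]) i j = Kc v b i j @ [x]"
  by (simp add: Kc_def)

definition Vv :: "'b list \<Rightarrow> nat \<Rightarrow> 'b list" where "Vv v i = drop (Suc i) v @ take i v"

lemma Kc_last: "Kc v (b @ [x]) i (length b) = b @ Vv v i" by (simp add: Kc_def Vv_def)
lemma Kc_single: "Kc v [x] i 0 = Vv v i" by (simp add: Kc_def Vv_def)
lemma length_Vv: "i < length v \<Longrightarrow> length (Vv v i) = length v - 1" by (simp add: Vv_def)

lemma cf_last:
  fixes pair :: "'b \<Rightarrow> 'b \<Rightarrow> 'k::field"
  shows "cf deg pair d v (b @ [x]) i (length b)
   = Defs.sgn (wdeg deg b * (wdeg deg v + (2 - d))) * cf deg pair d v [x] i 0"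
proof -
  have "Defs.sgn (deg (v ! i) + (wdeg deg v + d) * wdeg deg b + (wdeg deg (take i v) + sdeg deg x + d) * wdeg deg (drop (Suc i) v))
     = (Defs.sgn (wdeg deg b * (wdeg deg v + (2 - d))) * Defs.sgn (deg (v ! i) + (wdeg deg (take i v) + sdeg deg x + d) * wdeg deg (drop (Suc i) v)) :: 'k)"
    unfolding sgn_add[symmetric] by (rule sgn_even) (simp add: algebra_simps)
  then show ?thesis by (simp add: cf_def)
qed

lemma linJN_brOm: "lin (JN deg) (brOm_basis deg pair d v (p, q)) z =
    (\<Sum>i<length v. \<Sum>j<length p. cf deg pair d v p i j * JN deg (Kc v p i j, q) z)
  + (\<Sum>i<length v. \<Sum>j<length q. (Defs.sgn (wdeg deg p * (wdeg deg v + (2 - d))) * cf deg pair d v q i j) * JN deg (p, Kc v q i j) z)"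
  unfolding brOm_basis_eq
  by (subst lin_add) (auto simp: lin_sumvec2 intro!: fin_supp_sum)

lemma Psi_lin:
  fixes pair :: "'b \<Rightarrow> 'b \<Rightarrow> 'k::field"
  shows "Psi deg pair d v (b, x) = (\<lambda>z. lin (JN deg) (brOm_basis deg pair d v (b @ [x], [])) z
                                     - lin (JN deg) (brOm_basis deg pair d v (b, [x])) z)"
proof -
  have 1: "liftmap (vec (b, x) (1::'k)) = vec (b, x, []) 1"
    by (simp add: liftmap_def)
  have 2: "Imap (vec (b, x, []) (1::'k)) = (\<lambda>z. vec (b @ [x], []) 1 z - vec (b, [x]) 1 z)"
    by (simp add: Imap_def)
  have 3: "lin (brOm_basis deg pair d v) (\<lambda>z. vec (b @ [x], []) 1 z - vec (b, [x]) 1 z)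
       = (\<lambda>z. brOm_basis deg pair d v (b @ [x], []) z - brOm_basis deg pair d v (b, [x]) z)"
    by (subst lin_diff) simp_all
  have 4: "lin (JN deg) (\<lambda>z. brOm_basis deg pair d v (b @ [x], []) z - brOm_basis deg pair d v (b, [x]) z)
      = (\<lambda>z. lin (JN deg) (brOm_basis deg pair d v (b @ [x], [])) z - lin (JN deg) (brOm_basis deg pair d v (b, [x])) z)"
    by (rule lin_diff) (simp_all add: fin_supp_brOm[unfolded fun_eq_iff])
  show ?thesis unfolding Psi_def 1 2 3 4 ..
qed

lemma Psi_eq:
  fixes pair :: "'b \<Rightarrow> 'b \<Rightarrow> 'k::field"
  shows "Psi deg pair d v (b, x) z =
     (\<Sum>i<length v. \<Sum>j<length b. vec (Kc v b i j, x) (cf deg pair d v b i j) z)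
   + (\<Sum>i<length v. cf deg pair d v (b @ [x]) i (length b) * (\<Sum>s<length v - 1. JNt deg (b @ Vv v i) [] (length b + s) z))"
proof -
  let ?s = "Defs.sgn (wdeg deg b * (wdeg deg v + (2 - d))) :: 'k"
  have inner1: "(\<Sum>j<length b. cf deg pair d v (b @ [x]) i j * JN deg (Kc v (b @ [x]) i j, []) z)
     = (\<Sum>j<length b. cf deg pair d v b i j * JN deg (Kc v b i j, [x]) z) + (\<Sum>j<length b. vec (Kc v b i j, x) (cf deg pair d v b i j) z)" for i
    unfolding sum.distrib[symmetric]
    by (rule sum.cong) (simp_all add: cf_snoc Kc_snoc JN_snoc distrib_left vec_scale)
  have inner2: "cf deg pair d v (b @ [x]) i (length b) * JN deg (Kc v (b @ [x]) i (length b), []) z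
     = ?s * cf deg pair d v [x] i 0 * JN deg (b, Kc v [x] i 0) z
       + cf deg pair d v (b @ [x]) i (length b) * (\<Sum>s<length v - 1. JNt deg (b @ Vv v i) [] (length b + s) z)"
    if "i < length v" for i
    using that by (simp add: Kc_last Kc_single JN_app length_Vv cf_last distrib_left)
  have "Psi deg pair d v (b, x) z =
      (\<Sum>i<length v. (\<Sum>j<length b. cf deg pair d v (b @ [x]) i j * JN deg (Kc v (b @ [x]) i j, []) z)
          + cf deg pair d v (b @ [x]) i (length b) * JN deg (Kc v (b @ [x]) i (length b), []) z)
    - ((\<Sum>i<length v. \<Sum>j<length b. cf deg pair d v b i j * JN deg (Kc v b i j, [x]) z)
       + (\<Sum>i<length v. ?s * cf deg pair d v [x] i 0 * JN deg (b, Kc v [x] i 0) z))"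
    unfolding Psi_lin linJN_brOm by simp
  also have "\<dots> = (\<Sum>i<length v. (\<Sum>j<length b. cf deg pair d v b i j * JN deg (Kc v b i j, [x]) z)
          + (\<Sum>j<length b. vec (Kc v b i j, x) (cf deg pair d v b i j) z)
          + (?s * cf deg pair d v [x] i 0 * JN deg (b, Kc v [x] i 0) z
       + cf deg pair d v (b @ [x]) i (length b) * (\<Sum>s<length v - 1. JNt deg (b @ Vv v i) [] (length b + s) z)))
    - ((\<Sum>i<length v. \<Sum>j<length b. cf deg pair d v b i j * JN deg (Kc v b i j, [x]) z)
       + (\<Sum>i<length v. ?s * cf deg pair d v [x] i 0 * JN deg (b, Kc v [x] i 0) z))"
    by (intro arg_cong2[where f="(-)"] refl sum.cong) (simp_all add: inner1 inner2)
  also have "\<dots> = (\<Sum>i<length v. \<Sum>j<length b. vec (Kc v b i j, x) (cf deg pair d v b i j) z)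
   + (\<Sum>i<length v. cf deg pair d v (b @ [x]) i (length b) * (\<Sum>s<length v - 1. JNt deg (b @ Vv v i) [] (length b + s) z))"
    by (simp add: sum.distrib)
  finally show ?thesis .
qed



lemma wdeg_split: "i < length xs \<Longrightarrow> wdeg deg xs = wdeg deg (take i xs) + sdeg deg (xs ! i) + wdeg deg (drop (Suc i) xs)"
  by (metis id_take_nth_drop wdeg_append wdeg_Cons add.assoc)

lemma sgn_rel: "even (E1 + X - (Y + E2)) \<Longrightarrow> Defs.sgn E1 * p * Defs.sgn X = Defs.sgn Y * (Defs.sgn E2 * (p::'k::field))"
  by (simp add: Defs.sgn_def) (smt (verit) even_add even_diff)

lemma S2a:
  fixes pair :: "'b \<Rightarrow> 'b \<Rightarrow> 'k::field"
  assumes H: "\<forall>a b. pair a b \<noteq> 0 \<longrightarrow> deg a + deg b = d"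
    and i: "i < length v" and j: "j < length b"
  shows "cf deg pair d v b i j * Defs.sgn (sdeg deg x * wdeg deg (Kc v b i j))
       = Defs.sgn (sdeg deg x * wdeg deg b) * cf deg pair d v (x # b) i (Suc j)"
proof (cases "pair (v ! i) (b ! j) = 0")
  case True then show ?thesis by (simp add: cf_def)
next
  case False
  then have dd: "d = deg (v ! i) + deg (b ! j)" using H by auto
  have e: "even ((deg (v ! i) + (wdeg deg v + d) * wdeg deg (take j b) + (wdeg deg (take i v) + sdeg deg (b ! j) + d) * wdeg deg (drop (Suc i) v))
     + sdeg deg x * wdeg deg (Kc v b i j)
     - (sdeg deg x * wdeg deg b + (deg (v ! i) + (wdeg deg v + d) * (sdeg deg x + wdeg deg (take j b)) + (wdeg deg (take i v) + sdeg deg (b ! j) + d) * wdeg deg (drop (Suc i) v))))"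
    unfolding wdeg_split[OF i, of deg] wdeg_split[OF j, of deg] dd
    by (simp add: Kc_def sdeg_def algebra_simps even_add even_mult_iff)
  show ?thesis
    unfolding cf_def using sgn_rel[OF e, where p="pair (v ! i) (b ! j)"] by simp
qed

lemma S2b:
  fixes pair :: "'b \<Rightarrow> 'b \<Rightarrow> 'k::field"
  assumes H: "\<forall>a b. pair a b \<noteq> 0 \<longrightarrow> deg a + deg b = d"
    and i: "i < length v"
  shows "cf deg pair d v (b @ [x]) i (length b) * Defs.sgn (wdeg deg (Vv v i) * wdeg deg b)
       = Defs.sgn (sdeg deg x * wdeg deg b) * cf deg pair d v (x # b) i 0"
proof (cases "pair (v ! i) x = 0")
  case True then show ?thesis by (simp add: cf_def)
next
  case False
  then have dd: "d = deg (v ! i) + deg x" using H by auto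
  show ?thesis
    unfolding cf_def nth_append_length nth_Cons_0 take_0 take_append take_all_iff
    apply (simp only: diff_self_eq_0 take_0 append_Nil2 order_refl if_True)
    apply (rule sgn_rel)
    unfolding wdeg_split[OF i, of deg] dd
    by (simp add: Vv_def sdeg_def algebra_simps even_add even_mult_iff)
qed

definition Rt :: "('b \<Rightarrow> int) \<Rightarrow> 'b list \<Rightarrow> nat \<Rightarrow> 'b list \<Rightarrow> 'k::field" where
  "Rt deg u t = vec (drop t u @ take t u) (Defs.sgn (wdeg deg (drop t u) * wdeg deg (take t u)))"

lemma tele_step:
  assumes t: "t < length u"
  shows "Defs.sgn (wdeg deg (drop (Suc t) u) * (wdeg deg (take t u) + sdeg deg (u ! t))) * BB deg (drop (Suc t) u @ take t u, u ! t) z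
       = Rt deg u (Suc t) z - (Rt deg u t z :: 'k::field)"
proof -
  have l1: "take (Suc t) u = take t u @ [u ! t]" using t by (rule take_Suc_conv_app_nth)
  have l2: "drop t u = u ! t # drop (Suc t) u" using t by (rule Cons_nth_drop_Suc[symmetric])
  have c: "Defs.sgn (wdeg deg (drop (Suc t) u) * (wdeg deg (take t u) + sdeg deg (u ! t)))
      * Defs.sgn (sdeg deg (u ! t) * (wdeg deg (drop (Suc t) u) + wdeg deg (take t u)))
      = (Defs.sgn ((sdeg deg (u ! t) + wdeg deg (drop (Suc t) u)) * wdeg deg (take t u)) :: 'k)"
    unfolding sgn_add[symmetric] by (rule sgn_even) (simp add: algebra_simps)
  show ?thesis
    unfolding Rt_def BB_def l1 l2 using c by (simp add: vec_def algebra_simps)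
qed

lemma tele:
  assumes "m + n \<le> length u"
  shows "(\<Sum>s<n. Defs.sgn (wdeg deg (drop (Suc (m + s)) u) * (wdeg deg (take (m + s) u) + sdeg deg (u ! (m + s)))) * BB deg (drop (Suc (m + s)) u @ take (m + s) u, u ! (m + s)) z)
     = Rt deg u (m + n) z - (Rt deg u m z :: 'k::field)"
  using assms
proof (induction n)
  case 0 then show ?case by simp
next
  case (Suc n)
  have a: "m + n \<le> length u" "m + n < length u" using Suc.prems by simp_all
  show ?case unfolding sum.lessThan_Suc Suc.IH[OF a(1)] add_Suc_right tele_step[OF a(2)] by simp
qed

lemma lin_sum_scale':
  assumes "finite I" "\<And>i. fin_supp (T i)"
  shows "lin f (\<lambda>z. \<Sum>i\<in>I. c i * T i z) = (\<lambda>z. \<Sum>i\<in>I. c i * lin f (T i) z)"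
  using assms by (simp add: lin_sum fin_supp_scale lin_scale)

lemma basis2_z:
  fixes pair :: "'b \<Rightarrow> 'b \<Rightarrow> 'k::field"
  assumes H: "\<forall>a b. pair a b \<noteq> 0 \<longrightarrow> deg a + deg b = d"
  shows "lin (BB deg) (Psi deg pair d v (b, x)) z = lin (M deg pair d v) (BB deg (b, x)) z"
proof -
  let ?\<sigma> = "Defs.sgn (sdeg deg x * wdeg deg b) :: 'k"
  let ?c = "\<lambda>i. cf deg pair d v (b @ [x]) i (length b)"
  let ?k = "length v"
  define F1 :: "'b list \<times> 'b \<Rightarrow> 'k" where "F1 = (\<lambda>z. \<Sum>i<length v. \<Sum>j<length b. vec (Kc v b i j, x) (cf deg pair d v b i j) z)"
  define G :: "nat \<Rightarrow> 'b list \<times> 'b \<Rightarrow> 'k" where "G = (\<lambda>i z. \<Sum>s<length v - 1. JNt deg (b @ Vv v i) [] (length b + s) z)"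
  have Psi: "Psi deg pair d v (b, x) = (\<lambda>z. F1 z + (\<Sum>i<length v. ?c i * G i z))"
    unfolding F1_def G_def by (rule ext, rule Psi_eq)
  have fF1: "fin_supp F1" unfolding F1_def by (intro fin_supp_sum) auto
  have fG: "fin_supp (G i)" for i unfolding G_def JNt_def by (intro fin_supp_sum) auto
  have fF2: "fin_supp (\<lambda>z. \<Sum>i<length v. ?c i * G i z)" using fG by (intro fin_supp_sum fin_supp_scale) auto
  have LHS: "lin (BB deg) (Psi deg pair d v (b, x)) z
     = (\<Sum>i<length v. \<Sum>j<length b. cf deg pair d v b i j * BB deg (Kc v b i j, x) z)
     + (\<Sum>i<length v. ?c i * (\<Sum>s<length v - 1. Defs.sgn (wdeg deg (drop (Suc (length b + s)) (b @ Vv v i)) * (wdeg deg (take (length b + s) (b @ Vv v i)) + sdeg deg ((b @ Vv v i) ! (length b + s))))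
             * BB deg (drop (Suc (length b + s)) (b @ Vv v i) @ take (length b + s) (b @ Vv v i), (b @ Vv v i) ! (length b + s)) z))"
    unfolding Psi lin_add[OF fF1 fF2] lin_sum_scale'[OF finite_lessThan fG]
    unfolding F1_def G_def JNt_def
    by (simp add: lin_sumvec2 lin_sumvec)
  have RHS: "lin (M deg pair d v) (BB deg (b, x)) z = M deg pair d v (b @ [x]) z - ?\<sigma> * M deg pair d v (x # b) z"
    unfolding BB_def by (subst lin_diff) simp_all
  have Mbx: "M deg pair d v (b @ [x]) z = (\<Sum>i<length v. (\<Sum>j<length b. vec (Kc v b i j @ [x]) (cf deg pair d v b i j) z) + vec (b @ Vv v i) (?c i) z)"
    unfolding M_def by (simp add: Kc_snoc cf_snoc Kc_last)
  have Mxb: "M deg pair d v (x # b) z = (\<Sum>i<length v. vec (Vv v i @ b) (cf deg pair d v (x # b) i 0) z + (\<Sum>j<length b. vec (x # Kc v b i j) (cf deg pair d v (x # b) i (Suc j)) z))"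
    unfolding M_def length_Cons sum.lessThan_Suc_shift by (simp add: Kc_def Vv_def)
  have per_ij: "cf deg pair d v b i j * BB deg (Kc v b i j, x) z = vec (Kc v b i j @ [x]) (cf deg pair d v b i j) z - ?\<sigma> * vec (x # Kc v b i j) (cf deg pair d v (x # b) i (Suc j)) z"
    if "i < length v" "j < length b" for i j
    using S2a[OF H that, of x] unfolding BB_def by (simp add: vec_def algebra_simps)
  have per_i: "?c i * (\<Sum>s<length v - 1. Defs.sgn (wdeg deg (drop (Suc (length b + s)) (b @ Vv v i)) * (wdeg deg (take (length b + s) (b @ Vv v i)) + sdeg deg ((b @ Vv v i) ! (length b + s))))
             * BB deg (drop (Suc (length b + s)) (b @ Vv v i) @ take (length b + s) (b @ Vv v i), (b @ Vv v i) ! (length b + s)) z)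
     = vec (b @ Vv v i) (?c i) z - ?\<sigma> * vec (Vv v i @ b) (cf deg pair d v (x # b) i 0) z"
    if i: "i < length v" for i
  proof -
    have len: "length b + (length v - 1) = length (b @ Vv v i)" using length_Vv[OF i] by simp
    have "(\<Sum>s<length v - 1. Defs.sgn (wdeg deg (drop (Suc (length b + s)) (b @ Vv v i)) * (wdeg deg (take (length b + s) (b @ Vv v i)) + sdeg deg ((b @ Vv v i) ! (length b + s))))
             * BB deg (drop (Suc (length b + s)) (b @ Vv v i) @ take (length b + s) (b @ Vv v i), (b @ Vv v i) ! (length b + s)) z)
         = Rt deg (b @ Vv v i) (length (b @ Vv v i)) z - Rt deg (b @ Vv v i) (length b) z"
      using tele[of "length b" "length v - 1" "b @ Vv v i" deg z] len by simp
    also have "\<dots> = vec (b @ Vv v i) 1 z - vec (Vv v i @ b) (Defs.sgn (wdeg deg (Vv v i) * wdeg deg b)) z"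
      by (simp add: Rt_def)
    finally have T: "(\<Sum>s<length v - 1. Defs.sgn (wdeg deg (drop (Suc (length b + s)) (b @ Vv v i)) * (wdeg deg (take (length b + s) (b @ Vv v i)) + sdeg deg ((b @ Vv v i) ! (length b + s))))
             * BB deg (drop (Suc (length b + s)) (b @ Vv v i) @ take (length b + s) (b @ Vv v i), (b @ Vv v i) ! (length b + s)) z)
         = vec (b @ Vv v i) 1 z - vec (Vv v i @ b) (Defs.sgn (wdeg deg (Vv v i) * wdeg deg b)) z" .
    show ?thesis unfolding T right_diff_distrib vec_scale2 mult_1_right S2b[OF H i, of b x]
      by (simp add: vec_def)
  qed
  have per_i2: "(\<Sum>j<length b. cf deg pair d v b i j * BB deg (Kc v b i j, x) z)
      + ?c i * (\<Sum>s<length v - 1. Defs.sgn (wdeg deg (drop (Suc (length b + s)) (b @ Vv v i)) * (wdeg deg (take (length b + s) (b @ Vv v i)) + sdeg deg ((b @ Vv v i) ! (length b + s))))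
             * BB deg (drop (Suc (length b + s)) (b @ Vv v i) @ take (length b + s) (b @ Vv v i), (b @ Vv v i) ! (length b + s)) z)
    = ((\<Sum>j<length b. vec (Kc v b i j @ [x]) (cf deg pair d v b i j) z) + vec (b @ Vv v i) (?c i) z)
      - ?\<sigma> * (vec (Vv v i @ b) (cf deg pair d v (x # b) i 0) z + (\<Sum>j<length b. vec (x # Kc v b i j) (cf deg pair d v (x # b) i (Suc j)) z))"
    if i: "i < length v" for i
  proof -
    have "(\<Sum>j<length b. cf deg pair d v b i j * BB deg (Kc v b i j, x) z)
       = (\<Sum>j<length b. vec (Kc v b i j @ [x]) (cf deg pair d v b i j) z) - ?\<sigma> * (\<Sum>j<length b. vec (x # Kc v b i j) (cf deg pair d v (x # b) i (Suc j)) z)"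
      unfolding sum_distrib_left sum_subtractf[symmetric] by (rule sum.cong) (simp_all add: per_ij[OF i])
    then show ?thesis unfolding per_i[OF i] by (simp add: algebra_simps)
  qed
  show ?thesis
    unfolding LHS RHS Mbx Mxb sum.distrib[symmetric] sum_distrib_left sum_subtractf[symmetric]
    by (rule sum.cong) (simp_all only: per_i2[unfolded sum_distrib_left] lessThan_iff)
qed



definition DBt :: "('b \<Rightarrow> int) \<Rightarrow> 'b list \<Rightarrow> nat \<Rightarrow> 'b list \<times> 'b \<Rightarrow> 'k::field" where
  "DBt deg u t = vec (drop (Suc t) u @ take t u, u ! t) (Defs.sgn (wdeg deg (take (Suc t) u) * wdeg deg (drop (Suc t) u)))"

definition rs :: "('b \<Rightarrow> int) \<Rightarrow> 'b list \<Rightarrow> nat \<Rightarrow> 'k::field" where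
  "rs deg w l = Defs.sgn (wdeg deg (take (Suc l) w) * wdeg deg (drop (Suc l) w))"

lemma sgn_rel3: "even (E1 + X - (Rr + E2 + Y)) \<Longrightarrow>
   Defs.sgn E1 * p * Defs.sgn X = Defs.sgn Rr * (Defs.sgn E2 * p) * (Defs.sgn Y :: 'k::field)"
  by (simp add: Defs.sgn_def) (smt (verit) even_add even_diff)

lemma PV_core:
  fixes pair :: "'b \<Rightarrow> 'b \<Rightarrow> 'k::field"
  assumes H: "\<forall>a b. pair a b \<noteq> 0 \<longrightarrow> deg a + deg b = d"
    and V: "V1 @ e # V2 = Dv @ Tv"
  shows "cf deg pair d (Tv @ y # Dv) (A @ c # B) (length Tv) (length A) * DBt deg (A @ (Dv @ Tv) @ B) (length A + length V1) z
    = rs deg (A @ c # B) (length A) * cf deg pair d (Tv @ y # Dv) ((B @ A) @ [c]) (length Tv) (length B + length A)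
      * JNt deg ((B @ A) @ (Dv @ Tv)) [] (length B + length A + length V1) z"
proof (cases "pair y c = 0")
  case True then show ?thesis by (simp add: cf_def)
next
  case False
  then have dd: "d = deg y + deg c" using H by auto
  have hV: "wdeg deg V2 = wdeg deg Dv + wdeg deg Tv - wdeg deg V1 - sdeg deg e"
    using arg_cong[OF V, of "wdeg deg"] by simp
  let ?wv = "wdeg deg Tv + sdeg deg y + wdeg deg Dv"
  have cf1: "cf deg pair d (Tv @ y # Dv) (A @ c # B) (length Tv) (length A)
     = Defs.sgn (deg y + (?wv + d) * wdeg deg A + (wdeg deg Tv + sdeg deg c + d) * wdeg deg Dv) * pair y c"
    by (simp add: cf_def add.assoc)
  have cf2: "cf deg pair d (Tv @ y # Dv) ((B @ A) @ [c]) (length Tv) (length B + length A)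
     = Defs.sgn (deg y + (?wv + d) * (wdeg deg B + wdeg deg A) + (wdeg deg Tv + sdeg deg c + d) * wdeg deg Dv) * pair y c"
    by (simp add: cf_def nth_append add.assoc)
  have r: "rs deg (A @ c # B) (length A) = Defs.sgn ((wdeg deg A + sdeg deg c) * wdeg deg B)"
    by (simp add: rs_def add.assoc)
  have k1: "DBt deg (A @ (Dv @ Tv) @ B) (length A + length V1) z
     = vec (V2 @ B @ A @ V1, e) (Defs.sgn ((wdeg deg A + wdeg deg V1 + sdeg deg e) * (wdeg deg V2 + wdeg deg B))) z"
    unfolding V[symmetric] by (simp add: DBt_def nth_append add.assoc)
  have k2: "JNt deg ((B @ A) @ (Dv @ Tv)) [] (length B + length A + length V1) z
     = vec (V2 @ B @ A @ V1, e) (Defs.sgn (wdeg deg V2 * (wdeg deg B + wdeg deg A + wdeg deg V1 + sdeg deg e))) z"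
    unfolding V[symmetric] by (simp add: JNt_def nth_append add.assoc)
  have e: "even ((deg y + (?wv + d) * wdeg deg A + (wdeg deg Tv + sdeg deg c + d) * wdeg deg Dv)
       + ((wdeg deg A + wdeg deg V1 + sdeg deg e) * (wdeg deg V2 + wdeg deg B))
     - ((wdeg deg A + sdeg deg c) * wdeg deg B
       + (deg y + (?wv + d) * (wdeg deg B + wdeg deg A) + (wdeg deg Tv + sdeg deg c + d) * wdeg deg Dv)
       + wdeg deg V2 * (wdeg deg B + wdeg deg A + wdeg deg V1 + sdeg deg e)))"
    unfolding hV dd by (simp add: sdeg_def algebra_simps even_add even_mult_iff)
  show ?thesis
    by (simp only: cf1 cf2 r k1 k2 vec_scale2 sgn_rel3[OF e])
qed

lemma sgn_rel2: "even (E1 + X - (Rr + E2)) \<Longrightarrow>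
   Defs.sgn E1 * p * Defs.sgn X = Defs.sgn Rr * (Defs.sgn E2 * (p :: 'k::field))"
  by (simp add: Defs.sgn_def) (smt (verit) even_add even_diff)

lemma PA1_core:
  fixes pair :: "'b \<Rightarrow> 'b \<Rightarrow> 'k::field"
  assumes H: "\<forall>a b. pair a b \<noteq> 0 \<longrightarrow> deg a + deg b = d"
  shows "cf deg pair d (Tv @ y # Dv) (P @ a # Q @ c # R) (length Tv) (length P + 1 + length Q)
        * DBt deg ((P @ a # Q) @ (Dv @ Tv) @ R) (length P) z
    = rs deg (P @ a # Q @ c # R) (length P)
      * vec (Q @ (Dv @ Tv) @ R @ P, a) (cf deg pair d (Tv @ y # Dv) (Q @ c # R @ P) (length Tv) (length Q)) z"
proof (cases "pair y c = 0")
  case True then show ?thesis by (simp add: cf_def nth_append vec_def)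
next
  case False
  then have dd: "d = deg y + deg c" using H by auto
  let ?wv = "wdeg deg Tv + sdeg deg y + wdeg deg Dv"
  have cf1: "cf deg pair d (Tv @ y # Dv) (P @ a # Q @ c # R) (length Tv) (length P + 1 + length Q)
     = Defs.sgn (deg y + (?wv + d) * (wdeg deg P + sdeg deg a + wdeg deg Q) + (wdeg deg Tv + sdeg deg c + d) * wdeg deg Dv) * pair y c"
    by (simp add: cf_def nth_append add.assoc)
  have cf2: "cf deg pair d (Tv @ y # Dv) (Q @ c # R @ P) (length Tv) (length Q)
     = Defs.sgn (deg y + (?wv + d) * wdeg deg Q + (wdeg deg Tv + sdeg deg c + d) * wdeg deg Dv) * pair y c"
    by (simp add: cf_def nth_append add.assoc)
  have r: "rs deg (P @ a # Q @ c # R) (length P) = Defs.sgn ((wdeg deg P + sdeg deg a) * (wdeg deg Q + sdeg deg c + wdeg deg R))"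
    by (simp add: rs_def add.assoc)
  have k1: "DBt deg ((P @ a # Q) @ (Dv @ Tv) @ R) (length P) z
     = vec (Q @ (Dv @ Tv) @ R @ P, a) (Defs.sgn ((wdeg deg P + sdeg deg a) * (wdeg deg Q + wdeg deg Dv + wdeg deg Tv + wdeg deg R))) z"
    by (simp add: DBt_def nth_append add.assoc)
  have e: "even ((deg y + (?wv + d) * (wdeg deg P + sdeg deg a + wdeg deg Q) + (wdeg deg Tv + sdeg deg c + d) * wdeg deg Dv)
       + ((wdeg deg P + sdeg deg a) * (wdeg deg Q + wdeg deg Dv + wdeg deg Tv + wdeg deg R))
     - ((wdeg deg P + sdeg deg a) * (wdeg deg Q + sdeg deg c + wdeg deg R)
       + (deg y + (?wv + d) * wdeg deg Q + (wdeg deg Tv + sdeg deg c + d) * wdeg deg Dv)))"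
    unfolding dd by (simp add: sdeg_def algebra_simps even_add even_mult_iff)
  show ?thesis
    by (simp only: cf1 cf2 r k1 vec_scale2 sgn_rel2[OF e])
qed

lemma PA3_core:
  fixes pair :: "'b \<Rightarrow> 'b \<Rightarrow> 'k::field"
  assumes H: "\<forall>a b. pair a b \<noteq> 0 \<longrightarrow> deg a + deg b = d"
  shows "cf deg pair d (Tv @ y # Dv) (P @ c # Q @ a # R) (length Tv) (length P)
        * DBt deg (P @ (Dv @ Tv) @ (Q @ a # R)) (length P + length (Dv @ Tv) + length Q) z
    = rs deg (P @ c # Q @ a # R) (length P + 1 + length Q)
      * vec ((R @ P) @ (Dv @ Tv) @ Q, a) (cf deg pair d (Tv @ y # Dv) (R @ P @ c # Q) (length Tv) (length R + length P)) z"
proof (cases "pair y c = 0")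
  case True then show ?thesis by (simp add: cf_def nth_append vec_def)
next
  case False
  then have dd: "d = deg y + deg c" using H by auto
  let ?wv = "wdeg deg Tv + sdeg deg y + wdeg deg Dv"
  have cf1: "cf deg pair d (Tv @ y # Dv) (P @ c # Q @ a # R) (length Tv) (length P)
     = Defs.sgn (deg y + (?wv + d) * wdeg deg P + (wdeg deg Tv + sdeg deg c + d) * wdeg deg Dv) * pair y c"
    by (simp add: cf_def nth_append add.assoc)
  have cf2: "cf deg pair d (Tv @ y # Dv) (R @ P @ c # Q) (length Tv) (length R + length P)
     = Defs.sgn (deg y + (?wv + d) * (wdeg deg R + wdeg deg P) + (wdeg deg Tv + sdeg deg c + d) * wdeg deg Dv) * pair y c"
    by (simp add: cf_def nth_append add.assoc)
  have r: "rs deg (P @ c # Q @ a # R) (length P + 1 + length Q) = Defs.sgn ((wdeg deg P + sdeg deg c + wdeg deg Q + sdeg deg a) * wdeg deg R)"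
    by (simp add: rs_def add.assoc)
  have k1: "DBt deg (P @ (Dv @ Tv) @ (Q @ a # R)) (length P + length (Dv @ Tv) + length Q) z
     = vec ((R @ P) @ (Dv @ Tv) @ Q, a) (Defs.sgn ((wdeg deg P + wdeg deg Dv + wdeg deg Tv + wdeg deg Q + sdeg deg a) * wdeg deg R)) z"
    by (simp add: DBt_def nth_append add.assoc)
  have e: "even ((deg y + (?wv + d) * wdeg deg P + (wdeg deg Tv + sdeg deg c + d) * wdeg deg Dv)
       + ((wdeg deg P + wdeg deg Dv + wdeg deg Tv + wdeg deg Q + sdeg deg a) * wdeg deg R)
     - ((wdeg deg P + sdeg deg c + wdeg deg Q + sdeg deg a) * wdeg deg R
       + (deg y + (?wv + d) * (wdeg deg R + wdeg deg P) + (wdeg deg Tv + sdeg deg c + d) * wdeg deg Dv)))"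
    unfolding dd by (simp add: sdeg_def algebra_simps even_add even_mult_iff)
  show ?thesis
    by (simp only: cf1 cf2 r k1 vec_scale2 sgn_rel2[OF e])
qed

lemma split_at: "i < length v \<Longrightarrow> \<exists>Tv y Dv. v = Tv @ y # Dv \<and> length Tv = i"
  by (rule exI[of _ "take i v"], rule exI[of _ "v ! i"], rule exI[of _ "drop (Suc i) v"]) (simp add: id_take_nth_drop)

lemma PVg:
  fixes pair :: "'b \<Rightarrow> 'b \<Rightarrow> 'k::field"
  assumes H: "\<forall>a b. pair a b \<noteq> 0 \<longrightarrow> deg a + deg b = d"
    and i: "i < length v" and j: "j < length w" and s: "s < length v - 1"
  shows "cf deg pair d v w i j * DBt deg (Kc v w i j) (j + s) z
    = rs deg w j * cf deg pair d v ((drop (Suc j) w @ take j w) @ [w ! j]) i (length w - 1)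
      * JNt deg ((drop (Suc j) w @ take j w) @ Vv v i) [] (length w - 1 + s) z"
proof -
  obtain Tv y Dv where v: "v = Tv @ y # Dv" and li: "length Tv = i" using split_at[OF i] by blast
  obtain A c B where w: "w = A @ c # B" and lj: "length A = j" using split_at[OF j] by blast
  have "s < length (Dv @ Tv)" using s v li by simp
  then obtain V1 e V2 where V: "Dv @ Tv = V1 @ e # V2" and ls: "length V1 = s" using split_at by blast
  show ?thesis using PV_core[OF H V[symmetric], of y A c B z]
    unfolding v w li[symmetric] lj[symmetric] ls[symmetric] by (simp add: Kc_def Vv_def add.commute)
qed

lemma PA1g:
  fixes pair :: "'b \<Rightarrow> 'b \<Rightarrow> 'k::field"
  assumes H: "\<forall>a b. pair a b \<noteq> 0 \<longrightarrow> deg a + deg b = d"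
    and i: "i < length v" and lr: "l + 1 + r < length w"
  shows "cf deg pair d v w i (l + 1 + r) * DBt deg (Kc v w i (l + 1 + r)) l z
    = rs deg w l * vec (Kc v (drop (Suc l) w @ take l w) i r, w ! l) (cf deg pair d v (drop (Suc l) w @ take l w) i r) z"
proof -
  obtain Tv y Dv where v: "v = Tv @ y # Dv" and li: "length Tv = i" using split_at[OF i] by blast
  have "l < length w" using lr by simp
  then obtain P a W where w1: "w = P @ a # W" and lp: "length P = l" using split_at by blast
  have "r < length W" using lr w1 lp by simp
  then obtain Q c R where w2: "W = Q @ c # R" and lq: "length Q = r" using split_at by blast
  show ?thesis using PA1_core[OF H, of Tv y Dv P a Q c R z]
    unfolding v w1 w2 li[symmetric] lp[symmetric] lq[symmetric] by (simp add: Kc_def add.commute nth_append)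
qed

lemma PA3g:
  fixes pair :: "'b \<Rightarrow> 'b \<Rightarrow> 'k::field"
  assumes H: "\<forall>a b. pair a b \<noteq> 0 \<longrightarrow> deg a + deg b = d"
    and i: "i < length v" and lr: "q + 1 + r < length w"
  shows "cf deg pair d v w i q * DBt deg (Kc v w i q) (q + (length v - 1) + r) z
    = rs deg w (q + 1 + r) * vec (Kc v (drop (Suc (q + 1 + r)) w @ take (q + 1 + r) w) i (length w - 1 - (q + 1 + r) + q), w ! (q + 1 + r))
        (cf deg pair d v (drop (Suc (q + 1 + r)) w @ take (q + 1 + r) w) i (length w - 1 - (q + 1 + r) + q)) z"
proof -
  obtain Tv y Dv where v: "v = Tv @ y # Dv" and li: "length Tv = i" using split_at[OF i] by blast
  have "q < length w" using lr by simp
  then obtain P c W where w1: "w = P @ c # W" and lp: "length P = q" using split_at by blast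
  have "r < length W" using lr w1 lp by simp
  then obtain Q a R where w2: "W = Q @ a # R" and lq: "length Q = r" using split_at by blast
  show ?thesis using PA3_core[OF H, of Tv y Dv P c Q a R z]
    unfolding v w1 w2 li[symmetric] lp[symmetric] lq[symmetric] by (simp add: Kc_def add.commute nth_append)
qed



lemma tri: "(\<Sum>j<(m::nat). \<Sum>t<j. f j t) = (\<Sum>t<m. \<Sum>r<m - 1 - t. f (t + 1 + r) t :: 'a::comm_monoid_add)"
proof (induction m)
  case 0 then show ?case by simp
next
  case (Suc m)
  have "(\<Sum>t<Suc m. \<Sum>r<Suc m - 1 - t. f (t + 1 + r) t) = (\<Sum>t<m. \<Sum>r<Suc m - 1 - t. f (t + 1 + r) t)"
    by (simp add: sum.lessThan_Suc)
  also have "\<dots> = (\<Sum>t<m. (\<Sum>r<m - 1 - t. f (t + 1 + r) t) + f m t)"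
  proof (rule sum.cong[OF refl])
    fix t assume "t \<in> {..<m}"
    then have "Suc m - 1 - t = Suc (m - 1 - t)" "t + 1 + (m - 1 - t) = m" by auto
    then show "(\<Sum>r<Suc m - 1 - t. f (t + 1 + r) t) = (\<Sum>r<m - 1 - t. f (t + 1 + r) t) + f m t"
      by (simp only: sum.lessThan_Suc)
  qed
  finally show ?case using Suc.IH by (simp add: sum.distrib sum.lessThan_Suc)
qed

lemma DB_eq: "DB deg u z = (\<Sum>t<length u. DBt deg u t z)"
  by (simp add: DB_def DBt_def)

lemma basis1_z:
  fixes pair :: "'b \<Rightarrow> 'b \<Rightarrow> 'k::field"
  assumes H: "\<forall>a b. pair a b \<noteq> 0 \<longrightarrow> deg a + deg b = d"
  shows "lin (DB deg) (M deg pair d v w) z = lin (Psi deg pair d v) (DB deg w) z"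
proof -
  define k where "k = length v"
  define m where "m = length w"
  define bl where "bl l = drop (Suc l) w @ take l w" for l
  define X1 :: "nat \<Rightarrow> nat \<Rightarrow> 'k" where "X1 i l = (\<Sum>j'<m - 1 - l. vec (Kc v (bl l) i j', w ! l) (cf deg pair d v (bl l) i j') z)" for i l
  define X2 :: "nat \<Rightarrow> nat \<Rightarrow> 'k" where "X2 i l = (\<Sum>q<l. vec (Kc v (bl l) i (m - 1 - l + q), w ! l) (cf deg pair d v (bl l) i (m - 1 - l + q)) z)" for i l
  define Y :: "nat \<Rightarrow> nat \<Rightarrow> 'k" where "Y i l = cf deg pair d v (bl l @ [w ! l]) i (m - 1) * (\<Sum>s<k - 1. JNt deg (bl l @ Vv v i) [] (m - 1 + s) z)" for i l
  have L: "lin (DB deg) (M deg pair d v w) z = (\<Sum>i<k. \<Sum>j<m. cf deg pair d v w i j * DB deg (Kc v w i j) z)"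
    unfolding M_def k_def m_def by (simp add: lin_sumvec2)
  have R: "lin (Psi deg pair d v) (DB deg w) z = (\<Sum>l<m. rs deg w l * Psi deg pair d v (bl l, w ! l) z)"
    unfolding DB_def m_def bl_def by (simp add: lin_sumvec rs_def)
  have split: "DB deg (Kc v w i j) z = (\<Sum>t<j. DBt deg (Kc v w i j) t z) + (\<Sum>s<k - 1. DBt deg (Kc v w i j) (j + s) z)
        + (\<Sum>r<m - 1 - j. DBt deg (Kc v w i j) (j + (k - 1) + r) z)"
    if "i < k" "j < m" for i j
  proof -
    have "length (Kc v w i j) = j + (k - 1) + (m - 1 - j)" using that unfolding k_def m_def by (simp add: Kc_def)
    then show ?thesis by (simp only: DB_eq sum_split_add)
  qed
  have Psi_l: "Psi deg pair d v (bl l, w ! l) z = (\<Sum>i<k. X1 i l + X2 i l) + (\<Sum>i<k. Y i l)" if "l < m" for l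
  proof -
    have "length (bl l) = (m - 1 - l) + l" using that unfolding bl_def m_def by simp
    then show ?thesis unfolding Psi_eq X1_def X2_def Y_def k_def[symmetric]
      using that by (simp only: sum_split_add) (simp add: \<open>length (bl l) = (m - 1 - l) + l\<close>)
  qed
  have a: "(\<Sum>j<m. cf deg pair d v w i j * (\<Sum>s<k - 1. DBt deg (Kc v w i j) (j + s) z)) = (\<Sum>l<m. rs deg w l * Y i l)"
    if i: "i < k" for i
  proof (rule sum.cong[OF refl])
    fix j assume "j \<in> {..<m}"
    then have j: "j < m" by simp
    have "cf deg pair d v w i j * (\<Sum>s<k - 1. DBt deg (Kc v w i j) (j + s) z)
        = (\<Sum>s<k - 1. rs deg w j * cf deg pair d v (bl j @ [w ! j]) i (m - 1) * JNt deg (bl j @ Vv v i) [] (m - 1 + s) z)"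
      unfolding sum_distrib_left
      by (rule sum.cong[OF refl]) (use PVg[OF H] i j in \<open>simp add: k_def m_def bl_def\<close>)
    then show "cf deg pair d v w i j * (\<Sum>s<k - 1. DBt deg (Kc v w i j) (j + s) z) = rs deg w j * Y i j"
      unfolding Y_def by (simp add: sum_distrib_left mult.assoc)
  qed
  have b: "(\<Sum>j<m. cf deg pair d v w i j * (\<Sum>t<j. DBt deg (Kc v w i j) t z)) = (\<Sum>l<m. rs deg w l * X1 i l)"
    if i: "i < k" for i
  proof -
    have "(\<Sum>j<m. cf deg pair d v w i j * (\<Sum>t<j. DBt deg (Kc v w i j) t z))
        = (\<Sum>j<m. \<Sum>t<j. cf deg pair d v w i j * DBt deg (Kc v w i j) t z)"
      by (simp add: sum_distrib_left)
    also have "\<dots> = (\<Sum>t<m. \<Sum>r<m - 1 - t. cf deg pair d v w i (t + 1 + r) * DBt deg (Kc v w i (t + 1 + r)) t z)"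
      by (rule tri)
    also have "\<dots> = (\<Sum>l<m. rs deg w l * X1 i l)"
      unfolding X1_def sum_distrib_left
      by (intro sum.cong refl) (use PA1g[OF H] i in \<open>simp add: k_def m_def bl_def\<close>)
    finally show ?thesis .
  qed
  have c: "(\<Sum>j<m. cf deg pair d v w i j * (\<Sum>r<m - 1 - j. DBt deg (Kc v w i j) (j + (k - 1) + r) z)) = (\<Sum>l<m. rs deg w l * X2 i l)"
    if i: "i < k" for i
  proof -
    have "(\<Sum>l<m. rs deg w l * X2 i l) = (\<Sum>l<m. \<Sum>q<l. rs deg w l * vec (Kc v (bl l) i (m - 1 - l + q), w ! l) (cf deg pair d v (bl l) i (m - 1 - l + q)) z)"
      unfolding X2_def by (simp add: sum_distrib_left)
    also have "\<dots> = (\<Sum>q<m. \<Sum>r<m - 1 - q. rs deg w (q + 1 + r) * vec (Kc v (bl (q + 1 + r)) i (m - 1 - (q + 1 + r) + q), w ! (q + 1 + r)) (cf deg pair d v (bl (q + 1 + r)) i (m - 1 - (q + 1 + r) + q)) z)"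
      by (rule tri)
    also have "\<dots> = (\<Sum>q<m. \<Sum>r<m - 1 - q. cf deg pair d v w i q * DBt deg (Kc v w i q) (q + (k - 1) + r) z)"
      by (intro sum.cong refl) (use PA3g[OF H] i in \<open>simp add: k_def m_def bl_def\<close>)
    also have "\<dots> = (\<Sum>j<m. cf deg pair d v w i j * (\<Sum>r<m - 1 - j. DBt deg (Kc v w i j) (j + (k - 1) + r) z))"
      by (simp add: sum_distrib_left)
    finally show ?thesis by simp
  qed
  have "lin (DB deg) (M deg pair d v w) z = (\<Sum>i<k. (\<Sum>l<m. rs deg w l * X1 i l) + (\<Sum>l<m. rs deg w l * X2 i l) + (\<Sum>l<m. rs deg w l * Y i l))"
    unfolding L
  proof (rule sum.cong[OF refl])
    fix i assume "i \<in> {..<k}"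
    then have i: "i < k" by simp
    have "(\<Sum>j<m. cf deg pair d v w i j * DB deg (Kc v w i j) z)
       = (\<Sum>j<m. cf deg pair d v w i j * (\<Sum>t<j. DBt deg (Kc v w i j) t z))
       + (\<Sum>j<m. cf deg pair d v w i j * (\<Sum>r<m - 1 - j. DBt deg (Kc v w i j) (j + (k - 1) + r) z))
       + (\<Sum>j<m. cf deg pair d v w i j * (\<Sum>s<k - 1. DBt deg (Kc v w i j) (j + s) z))"
      unfolding sum.distrib[symmetric] by (rule sum.cong[OF refl]) (simp add: split[OF i] algebra_simps)
    then show "(\<Sum>j<m. cf deg pair d v w i j * DB deg (Kc v w i j) z) = (\<Sum>l<m. rs deg w l * X1 i l) + (\<Sum>l<m. rs deg w l * X2 i l) + (\<Sum>l<m. rs deg w l * Y i l)"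
      using a[OF i] b[OF i] c[OF i] by simp
  qed
  also have "\<dots> = (\<Sum>l<m. rs deg w l * ((\<Sum>i<k. X1 i l + X2 i l) + (\<Sum>i<k. Y i l)))"
    by (simp add: sum.distrib sum_distrib_left distrib_left sum.swap[of _ "{..<k}"])
  also have "\<dots> = lin (Psi deg pair d v) (DB deg w) z"
    unfolding R by (rule sum.cong[OF refl]) (simp add: Psi_l)
  finally show ?thesis .
qed



lemma fin_supp_Psi[intro]: "fin_supp (Psi deg pair d v p)"
  unfolding Psi_def Imap_def liftmap_def by (intro fin_supp_lin) auto

lemma lin_sum_scale:
  assumes "finite I" "\<And>i. fin_supp (T i)"
  shows "lin f (\<lambda>z. \<Sum>i\<in>I. c i * T i z) = (\<lambda>z. \<Sum>i\<in>I. c i * lin f (T i) z)"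
  using assms by (simp add: lin_sum fin_supp_scale lin_scale)

lemma br_eq:
  assumes "fin_supp r" "fin_supp q"
  shows "br deg pair d r q = (\<lambda>z. \<Sum>a\<in>supp r. r a * lin (M deg pair d a) q z)"
proof -
  have "br deg pair d r q = mult (\<lambda>z. \<Sum>a\<in>supp r. r a * lin (dbr_basis deg pair d a) q z)"
    by (simp add: br_def dbr_def ext2_lin)
  also have "\<dots> = (\<lambda>z. \<Sum>a\<in>supp r. r a * mult (lin (dbr_basis deg pair d a) q) z)"
    unfolding mult_def using assms(1)[unfolded fin_supp_def] by (intro lin_sum_scale fin_supp_lin assms(2) fin_supp_dbr)
  also have "\<dots> = (\<lambda>z. \<Sum>a\<in>supp r. r a * lin (M deg pair d a) q z)"
  proof -
    have "lin (\<lambda>(p, q). vec (p @ q) 1) (lin (dbr_basis deg pair d a) q) = lin (M deg pair d a) q" for a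
      by (subst lin_lin[OF assms(2) fin_supp_dbr]) (simp add: M_eq[unfolded mult_def])
    then show ?thesis by (simp add: mult_def)
  qed
  finally show ?thesis .
qed

lemma brNat_eq:
  fixes r :: "'b list \<Rightarrow> 'k::field"
  assumes "fin_supp r" "fin_supp \<omega>"
  shows "brNat deg pair d r \<omega> = (\<lambda>z. \<Sum>a\<in>supp r. r a * lin (Psi deg pair d a) \<omega> z)"
proof -
  define X where "X = Imap (liftmap \<omega>)"
  have fr: "finite (supp r)" using assms(1) fin_supp_def by auto
  have fX: "fin_supp X" unfolding X_def Imap_def liftmap_def
    by (intro fin_supp_lin assms(2) fin_supp_f1 fin_supp_f2)
  have fB: "fin_supp (\<lambda>z. r a * lin (brOm_basis deg pair d a) X z)" for a
    by (intro fin_supp_scale fin_supp_lin fX fin_supp_brOm)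
  have e1: "brNat deg pair d r \<omega> = natmap deg (Jmap (\<lambda>z. \<Sum>a\<in>supp r. r a * lin (brOm_basis deg pair d a) X z))"
    unfolding brNat_def brOm_def ext2_lin X_def ..
  have e2: "natmap deg (Jmap (\<lambda>z. \<Sum>a\<in>supp r. r a * lin (brOm_basis deg pair d a) X z)) = lin (JN deg) (\<lambda>z. \<Sum>a\<in>supp r. r a * lin (brOm_basis deg pair d a) X z)"
    by (intro natJ_eq fin_supp_sum fB fr)
  have e3: "lin (JN deg) (\<lambda>z. \<Sum>a\<in>supp r. r a * lin (brOm_basis deg pair d a) X z) = (\<lambda>z. \<Sum>a\<in>supp r. r a * lin (JN deg) (lin (brOm_basis deg pair d a) X) z)"
    by (intro lin_sum_scale fin_supp_lin fin_supp_brOm fr fX)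
  have e4: "lin (JN deg) (lin (brOm_basis deg pair d a) X) = lin (Psi deg pair d a) \<omega>" for a
  proof -
    let ?f1 = "\<lambda>(b, x). vec (b, x, []) (1::'k)"
    let ?f2 = "\<lambda>(b, x, c). (\<lambda>z. vec (b @ [x], c) 1 z - vec (b, x # c) (1::'k) z)"
    have h1: "X = lin (\<lambda>p. lin ?f2 (?f1 p)) \<omega>"
      unfolding X_def Imap_def liftmap_def by (rule lin_lin[OF assms(2) fin_supp_f1])
    have h2: "lin (brOm_basis deg pair d a) (lin (\<lambda>p. lin ?f2 (?f1 p)) \<omega>) = lin (\<lambda>p. lin (brOm_basis deg pair d a) (lin ?f2 (?f1 p))) \<omega>"
      by (rule lin_lin[OF assms(2)]) (intro fin_supp_lin fin_supp_f1 fin_supp_f2)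
    have h3: "lin (JN deg) (lin (\<lambda>p. lin (brOm_basis deg pair d a) (lin ?f2 (?f1 p))) \<omega>) = lin (\<lambda>p. lin (JN deg) (lin (brOm_basis deg pair d a) (lin ?f2 (?f1 p)))) \<omega>"
      by (rule lin_lin[OF assms(2)]) (intro fin_supp_lin fin_supp_f1 fin_supp_f2 fin_supp_brOm)
    have h4: "(\<lambda>p. lin (JN deg) (lin (brOm_basis deg pair d a) (lin ?f2 (?f1 p)))) = Psi deg pair d a"
      unfolding Psi_def Imap_def liftmap_def by (simp only: lin_vec mult_1)
    show ?thesis unfolding h1 h2 h3 h4 ..
  qed
  show ?thesis unfolding e1 e2 e3 e4 ..
qed

lemma basis1:
  fixes pair :: "'b \<Rightarrow> 'b \<Rightarrow> 'k::field"
  assumes H: "\<forall>a b. pair a b \<noteq> 0 \<longrightarrow> deg a + deg b = d"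
  shows "lin (DB deg) (M deg pair d v w) = lin (Psi deg pair d v) (DB deg w)"
  by (rule ext, rule basis1_z[OF H])

lemma basis2:
  fixes pair :: "'b \<Rightarrow> 'b \<Rightarrow> 'k::field"
  assumes H: "\<forall>a b. pair a b \<noteq> 0 \<longrightarrow> deg a + deg b = d"
  shows "lin (BB deg) (Psi deg pair d v p) = lin (M deg pair d v) (BB deg p)"
proof -
  obtain b x where p: "p = (b, x)" by (cases p)
  show ?thesis unfolding p by (rule ext, rule basis2_z[OF H])
qed

theorem theorem5p4:
  fixes deg :: "'b \<Rightarrow> int"
    and D :: "nat \<Rightarrow> 'b \<Rightarrow> 'b list \<Rightarrow> 'k::field"
    and pair :: "'b \<Rightarrow> 'b \<Rightarrow> 'k"
    and d :: int
  assumes "cyclic_Ainf_coalgebra deg D pair d"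
  shows "(\<forall>r q :: 'b list \<Rightarrow> 'k. fin_supp r \<longrightarrow> fin_supp q \<longrightarrow>
            dbar deg (br deg pair d r q) = brNat deg pair d r (dbar deg q))
       \<and> (\<forall>(r :: 'b list \<Rightarrow> 'k) (\<omega> :: 'b list \<times> 'b \<Rightarrow> 'k). fin_supp r \<longrightarrow> fin_supp \<omega> \<longrightarrow>
            beta deg (brNat deg pair d r \<omega>) = br deg pair d r (beta deg \<omega>))"
proof -
  have H: "\<forall>a b. pair a b \<noteq> 0 \<longrightarrow> deg a + deg b = d"
  proof -
    have "cyclic_pairing deg D pair d" using assms unfolding cyclic_Ainf_coalgebra_def by (rule conjunct2)
    then show ?thesis unfolding cyclic_pairing_def by (rule conjunct1)
  qed
  have P1: "dbar deg (br deg pair d r q) = brNat deg pair d r (dbar deg q)"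
    if r: "fin_supp r" and q: "fin_supp q" for r q :: "'b list \<Rightarrow> 'k"
  proof -
    have fr: "finite (supp r)" using r fin_supp_def by auto
    have "dbar deg (br deg pair d r q) = (\<lambda>z. \<Sum>a\<in>supp r. r a * lin (DB deg) (lin (M deg pair d a) q) z)"
      unfolding br_eq[OF r q] dbar_eq using fr q by (intro lin_sum_scale fin_supp_lin fin_supp_M)
    also have "\<dots> = (\<lambda>z. \<Sum>a\<in>supp r. r a * lin (\<lambda>w. lin (DB deg) (M deg pair d a w)) q z)"
    proof -
      have "lin (DB deg) (lin (M deg pair d a) q) = lin (\<lambda>x. lin (DB deg) (M deg pair d a x)) q" for a
        by (rule lin_lin[OF q fin_supp_M])
      then show ?thesis by simp
    qed
    also have "\<dots> = (\<lambda>z. \<Sum>a\<in>supp r. r a * lin (\<lambda>w. lin (Psi deg pair d a) (DB deg w)) q z)"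
      using basis1[OF H] by simp
    also have "\<dots> = brNat deg pair d r (dbar deg q)"
    proof -
      have "lin (Psi deg pair d a) (lin (DB deg) q) = lin (\<lambda>x. lin (Psi deg pair d a) (DB deg x)) q" for a
        by (rule lin_lin[OF q fin_supp_DB])
      then show ?thesis unfolding brNat_eq[OF r fin_supp_lin[OF q fin_supp_DB, folded dbar_eq]] dbar_eq by simp
    qed
    finally show ?thesis .
  qed
  have P2: "beta deg (brNat deg pair d r \<omega>) = br deg pair d r (beta deg \<omega>)"
    if r: "fin_supp r" and w: "fin_supp \<omega>" for r :: "'b list \<Rightarrow> 'k" and \<omega>
  proof -
    have fr: "finite (supp r)" using r fin_supp_def by auto
    have "beta deg (brNat deg pair d r \<omega>) = (\<lambda>z. \<Sum>a\<in>supp r. r a * lin (BB deg) (lin (Psi deg pair d a) \<omega>) z)"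
      unfolding brNat_eq[OF r w] beta_eq using fr w by (intro lin_sum_scale fin_supp_lin fin_supp_Psi)
    also have "\<dots> = (\<lambda>z. \<Sum>a\<in>supp r. r a * lin (\<lambda>p. lin (BB deg) (Psi deg pair d a p)) \<omega> z)"
    proof -
      have "lin (BB deg) (lin (Psi deg pair d a) \<omega>) = lin (\<lambda>x. lin (BB deg) (Psi deg pair d a x)) \<omega>" for a
        by (rule lin_lin[OF w fin_supp_Psi])
      then show ?thesis by simp
    qed
    also have "\<dots> = (\<lambda>z. \<Sum>a\<in>supp r. r a * lin (\<lambda>p. lin (M deg pair d a) (BB deg p)) \<omega> z)"
      using basis2[OF H] by simp
    also have "\<dots> = br deg pair d r (beta deg \<omega>)"
    proof -
      have "lin (M deg pair d a) (lin (BB deg) \<omega>) = lin (\<lambda>x. lin (M deg pair d a) (BB deg x)) \<omega>" for a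
        by (rule lin_lin[OF w fin_supp_BB])
      then show ?thesis unfolding br_eq[OF r fin_supp_lin[OF w fin_supp_BB, folded beta_eq]] beta_eq by simp
    qed
    finally show ?thesis .
  qed
  show ?thesis using P1 P2 by blast
qed

end
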